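(* Let $\tau>0$, $x_t\in\mathbb{R}^n$, let $i_t$ be an index, and let $x_{t+1}=\operatorname{prox}_{\tau g}(x_t-\tau\nabla f_{i_t}(x_t))$. Then for every $z\in\mathbb{R}^n$ and every $\epsilon>0$, \begin{align*} \|x_{t+1}-z\|^2-\|x_t-z\|^2&\le 2\tau[f_{i_t}(z)-f_{i_t}(x_t)]+2\tau\bigl(g(z)-g(x_{t+1})\bigr)+\frac{\tau}{\epsilon}\|\nabla f_{i_t}(x_t)-\nabla f(x_t)\|^2\\ &\quad+2\tau[f(x_t)-f(x_{t+1})]+[\tau\epsilon+\tau L-1]\|x_t-x_{t+1}\|^2. \end{align*}
   Context: Let $D$ be a probability distribution on an index set, and for each index $i$ let $f_i:\mathbb{R}^n\to\mathbb{R}$ be convex and $L$-smooth (differentiable with $L$-Lipschitz gradient, $L>0$); let $f(x)=\mathbb{E}_{i\sim D}[f_i(x)]$ with $\mathbb{E}_{i\sim D}[\nabla f_i(x)]=\nabla f(x)$. Let $g:\mathbb{R}^n\to\mathbb{R}\cup\{+\infty\}$ be proper, convex and lower semicontinuous. $\operatorname{prox}_{\tau g}(y)=\arg\min_u\{\tau g(u)+\tfrac12\|y-u\|^2\}$. *)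

theory Defs
  imports "HOL-Analysis.Analysis" "HOL-Probability.Probability"
begin

definition proper_fun :: "('a \<Rightarrow> ereal) \<Rightarrow> bool" where
  "proper_fun g \<longleftrightarrow> (\<forall>x. g x \<noteq> -\<infinity>) \<and> (\<exists>x. g x \<noteq> \<infinity>)"

definition ext_convex :: "('a::real_vector \<Rightarrow> ereal) \<Rightarrow> bool" where
  "ext_convex g \<longleftrightarrow> (\<forall>x y u. 0 < u \<and> u < 1 \<longrightarrow>
      g (u *\<^sub>R x + (1 - u) *\<^sub>R y) \<le> ereal u * g x + ereal (1 - u) * g y)"

definition lsc :: "('a::topological_space \<Rightarrow> ereal) \<Rightarrow> bool" where
  "lsc g \<longleftrightarrow> (\<forall>x. g x \<le> Liminf (at x) g)"

definition prox :: "real \<Rightarrow> ('a::real_normed_vector \<Rightarrow> ereal) \<Rightarrow> 'a \<Rightarrow> 'a" where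
  "prox \<tau> g y = arg_min (\<lambda>u. ereal \<tau> * g u + ereal ((norm (y - u))\<^sup>2 / 2)) (\<lambda>_. True)"

end

theory Submission
  imports Defs
begin

definition lscp :: "('a::topological_space \<Rightarrow> ereal) \<Rightarrow> bool" where
  "lscp h \<longleftrightarrow> (\<forall>x c. c < h x \<longrightarrow> eventually (\<lambda>y. c < h y) (at x))"

lemma lsc_lscp: "lsc g \<Longrightarrow> lscp g"
  unfolding lsc_def lscp_def using le_Liminf_iff by blast

lemma lscp_open:
  assumes "lscp h" shows "open {x. c < h x}"
proof (subst open_subopen, intro ballI)
  fix x assume x: "x \<in> {x. c < h x}"
  then have "eventually (\<lambda>y. c < h y) (at x)" using assms unfolding lscp_def by auto
  then obtain S where S: "open S" "x \<in> S" "\<forall>y\<in>S. y \<noteq> x \<longrightarrow> c < h y"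
    unfolding eventually_at_topological by blast
  show "\<exists>T. open T \<and> x \<in> T \<and> T \<subseteq> {x. c < h x}"
    using S x by (intro exI[of _ S]) auto
qed

lemma lscp_min:
  assumes h: "lscp h" and K: "compact K" "K \<noteq> {}"
  shows "\<exists>x\<in>K. \<forall>y\<in>K. h x \<le> h y"
proof (rule ccontr)
  assume "\<not> ?thesis"
  then have nm: "\<forall>x\<in>K. \<exists>y\<in>K. h y < h x" by (auto simp: not_le)
  define m where "m = (INF x\<in>K. h x)"
  have gt: "\<forall>x\<in>K. \<exists>c. m < c \<and> c < h x"
  proof
    fix x assume "x \<in> K"
    then obtain y where "y \<in> K" "h y < h x" using nm by auto
    then have "m < h x" unfolding m_def by (meson INF_lower order.strict_trans1)
    then show "\<exists>c. m < c \<and> c < h x" using dense by blast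
  qed
  have cov: "K \<subseteq> (\<Union>c\<in>{c. m < c}. {x. c < h x})" using gt by blast
  obtain C where C: "C \<subseteq> {c. m < c}" "finite C" "K \<subseteq> (\<Union>c\<in>C. {x. c < h x})"
    using compactE_image[OF K(1), of "{c. m < c}" "\<lambda>c. {x. c < h x}"] cov lscp_open[OF h] by blast
  have "C \<noteq> {}" using C K(2) by auto
  define c0 where "c0 = Min C"
  have c0: "m < c0" using C \<open>C \<noteq> {}\<close> c0_def by auto
  have "\<forall>x\<in>K. c0 < h x"
  proof
    fix x assume "x \<in> K"
    then obtain c where "c \<in> C" "c < h x" using C by auto
    then show "c0 < h x" unfolding c0_def using C(2) by (meson Min_le order.strict_trans1)
  qed
  then have "c0 \<le> m" unfolding m_def by (meson INF_greatest less_imp_le)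
  then show False using c0 by simp
qed

lemma ereal_mult_gt:
  assumes "ereal a < gu" "tau > 0" "b < q"
  shows "ereal (tau * a + b) < ereal tau * gu + ereal q"
  using assms by (cases gu) (auto intro: add_less_le_mono)

lemma lscp_F:
  fixes g :: "'a::real_normed_vector \<Rightarrow> ereal"
  assumes g: "lscp g" and q: "continuous_on UNIV q" and tau: "tau > (0::real)"
    and ninf: "\<And>x. g x \<noteq> -\<infinity>"
  shows "lscp (\<lambda>u. ereal tau * g u + ereal (q u))"
  unfolding lscp_def
proof (intro allI impI)
  fix x c assume c: "c < ereal tau * g x + ereal (q x)"
  have "\<exists>a b. ereal a < g x \<and> b < q x \<and> c \<le> ereal (tau * a + b)"
  proof (cases "g x")
    case (real r)
    show ?thesis
    proof (cases c)
      case (real cr)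
      define d where "d = tau * r + q x - cr"
      have "d > 0" using c real \<open>g x = ereal r\<close> by (simp add: d_def)
      show ?thesis
        apply (rule exI[of _ "r - d / (4*tau)"], rule exI[of _ "q x - d/4"])
      proof (intro conjI)
        show "ereal (r - d / (4 * tau)) < g x" using \<open>d > 0\<close> tau \<open>g x = ereal r\<close> by simp
        show "q x - d / 4 < q x" using \<open>d > 0\<close> by simp
        have "tau * (r - d / (4 * tau)) = tau * r - d/4" using tau by (simp add: field_simps)
        then have "tau * (r - d / (4 * tau)) + (q x - d / 4) = cr + d/2" using d_def by linarith
        then show "c \<le> ereal (tau * (r - d / (4 * tau)) + (q x - d / 4))"
          using real \<open>d > 0\<close> by simp
      qed
    next
      case PInf then show ?thesis using c by simp
    next
      case MInf then show ?thesis using \<open>g x = ereal r\<close> by (intro exI[of _ "r - 1"] exI[of _ "q x - 1"]) auto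
    qed
  next
    case PInf
    show ?thesis
    proof (cases c)
      case (real cr)
      show ?thesis
        apply (rule exI[of _ "(cr - (q x - 1)) / tau"], rule exI[of _ "q x - 1"])
        using tau real PInf by (auto simp: field_simps)
    next
      case PInf then show ?thesis using c by simp
    next
      case MInf then show ?thesis using \<open>g x = \<infinity>\<close> by (intro exI[of _ "0"] exI[of _ "q x - 1"]) auto
    qed
  next
    case MInf then show ?thesis using ninf by simp
  qed
  then obtain a b where ab: "ereal a < g x" "b < q x" "c \<le> ereal (tau * a + b)" by blast
  have e1: "eventually (\<lambda>y. ereal a < g y) (at x)" using g ab(1) unfolding lscp_def by auto
  have "(q \<longlongrightarrow> q x) (at x)" using q by (simp add: continuous_on_def isCont_def[symmetric] continuous_on_eq_continuous_at)
  then have e2: "eventually (\<lambda>y. b < q y) (at x)" using ab(2) by (simp add: order_tendstoD(1))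
  show "eventually (\<lambda>y. c < ereal tau * g y + ereal (q y)) (at x)"
    using e1 e2
  proof eventually_elim
    case (elim y)
    then show ?case using ab(3) ereal_mult_gt[OF elim(1) tau elim(2)] by (meson order.strict_trans1)
  qed
qed

lemma big_real:
  fixes t A B V :: real
  assumes "A \<ge> 0" "B \<ge> 0" "t > 2 * (\<bar>V\<bar> + B + A + 1)" "n \<ge> t"
  shows "V < - (B + A * t) + n\<^sup>2 / 2"
proof -
  define K where "K = \<bar>V\<bar> + B + A + 1"
  have K1: "K \<ge> 1" using assms unfolding K_def by simp
  have t0: "t > 0" "t \<ge> 1" using assms K1 unfolding K_def[symmetric] by auto
  have "n\<^sup>2 \<ge> t\<^sup>2" using assms t0 by (simp add: power_mono)
  moreover have "t\<^sup>2 / 2 > K * t" using assms t0 unfolding K_def[symmetric] by (simp add: power2_eq_square)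
  moreover have "K * t = A * t + (\<bar>V\<bar> + B) * t + t" unfolding K_def by (simp add: algebra_simps)
  moreover have "(\<bar>V\<bar> + B) * t \<ge> \<bar>V\<bar> + B" using t0 assms by (simp add: mult_le_cancel_left1)
  ultimately show ?thesis using t0 abs_ge_self[of V] by linarith
qed

lemma convex_lower_bound:
  fixes g :: "'a::real_normed_vector \<Rightarrow> ereal"
  assumes cv: "ext_convex g" and ninf: "\<And>x. g x \<noteq> -\<infinity>" and a: "g x0 = ereal a"
    and m: "\<And>w. w \<in> cball x0 1 \<Longrightarrow> ereal m \<le> g w"
  shows "ereal (- ((\<bar>m\<bar> + \<bar>a\<bar>) * (1 + norm (u - x0)))) \<le> g u"
proof (cases "norm (u - x0) \<le> 1")
  case True
  then have "ereal m \<le> g u" using m by (simp add: dist_norm norm_minus_commute)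
  moreover have "- ((\<bar>m\<bar> + \<bar>a\<bar>) * (1 + norm (u - x0))) \<le> m"
  proof -
    have "(\<bar>m\<bar> + \<bar>a\<bar>) * (1 + norm (u - x0)) \<ge> \<bar>m\<bar> * 1"
      by (intro mult_mono) auto
    then show ?thesis by linarith
  qed
  ultimately show ?thesis using order_trans ereal_less_eq(3) by blast
next
  case False
  define r where "r = norm (u - x0)"
  have r1: "r > 1" using False r_def by simp
  define s where "s = 1 / r"
  have s: "0 < s" "s < 1" "r * s = 1" using r1 by (auto simp: s_def)
  define w where "w = s *\<^sub>R u + (1 - s) *\<^sub>R x0"
  have "w - x0 = s *\<^sub>R (u - x0)" by (simp add: w_def algebra_simps)
  then have "norm (w - x0) = 1" using s by (simp add: r_def[symmetric] mult.commute)
  then have "w \<in> cball x0 1" by (simp add: dist_norm norm_minus_commute)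
  then have mw: "ereal m \<le> g w" using m by simp
  have cw: "g w \<le> ereal s * g u + ereal (1 - s) * g x0"
    using cv s unfolding ext_convex_def w_def by blast
  show ?thesis
  proof (cases "g u")
    case (real b)
    have "ereal m \<le> ereal (s * b + (1 - s) * a)" using mw cw real a by (metis order_trans times_ereal.simps(1) plus_ereal.simps(1))
    then have "m \<le> s * b + (1 - s) * a" by simp
    then have "r * m \<le> r * (s * b + (1 - s) * a)" using r1 by simp
    also have "\<dots> = b + (r - 1) * a" using s by (simp add: algebra_simps)
    finally have rb: "r * m \<le> b + (r - 1) * a" .
    have "- (r * \<bar>m\<bar>) \<le> r * m" using mult_left_mono[of "-\<bar>m\<bar>" m r] r1 by simp
    moreover have "(r - 1) * a \<le> (r - 1) * \<bar>a\<bar>" using r1 by (simp add: mult_left_mono)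
    moreover have "(r - 1) * \<bar>a\<bar> \<le> (1 + r) * \<bar>a\<bar>" by (simp add: mult_right_mono)
    moreover have "r * \<bar>m\<bar> \<le> (1 + r) * \<bar>m\<bar>" by (simp add: mult_right_mono)
    ultimately have "- ((\<bar>m\<bar> + \<bar>a\<bar>) * (1 + r)) \<le> b" using rb by (simp add: algebra_simps)
    then show ?thesis using real r_def by simp
  next
    case PInf then show ?thesis by simp
  next
    case MInf then show ?thesis using ninf by simp
  qed
qed

lemma prox_exists:
  fixes g :: "'a::euclidean_space \<Rightarrow> ereal"
  assumes pr: "proper_fun g" and cv: "ext_convex g" and ls: "lsc g" and tau: "tau > 0"
  shows "\<exists>p. \<forall>u. ereal tau * g p + ereal ((norm (y - p))\<^sup>2 / 2) \<le> ereal tau * g u + ereal ((norm (y - u))\<^sup>2 / 2)"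
proof -
  define F where "F u = ereal tau * g u + ereal ((norm (y - u))\<^sup>2 / 2)" for u
  have ninf: "\<And>x. g x \<noteq> -\<infinity>" using pr unfolding proper_fun_def by auto
  obtain x0 where "g x0 \<noteq> \<infinity>" using pr unfolding proper_fun_def by auto
  then obtain a where a: "g x0 = ereal a" using ninf[of x0] by (cases "g x0") auto
  have lg: "lscp g" using ls by (rule lsc_lscp)
  obtain w0 where w0: "w0 \<in> cball x0 1" "\<And>w. w \<in> cball x0 1 \<Longrightarrow> g w0 \<le> g w"
    using lscp_min[OF lg, of "cball x0 1"] by auto
  have "g w0 \<le> g x0" using w0 by simp
  then obtain m where m: "g w0 = ereal m" using a ninf[of w0] by (cases "g w0") auto
  define C where "C = \<bar>m\<bar> + \<bar>a\<bar>"
  have lb: "ereal (- (C * (1 + norm (u - x0)))) \<le> g u" for u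
    unfolding C_def using convex_lower_bound[OF cv ninf a, of m u] w0 m by metis
  define V where "V = tau * a + (norm (y - x0))\<^sup>2 / 2"
  have FV: "F x0 = ereal V" by (simp add: F_def V_def a)
  define d where "d = norm (y - x0)"
  define R where "R = d + 2 * (\<bar>V\<bar> + tau * C * (1 + d) + tau * C + 1)"
  have C0: "C \<ge> 0" unfolding C_def by simp
  have far: "F u > ereal V" if u: "norm (u - x0) > R" for u
  proof -
    define t where "t = norm (u - x0) - d"
    have tgt: "t > 2 * (\<bar>V\<bar> + tau * C * (1 + d) + tau * C + 1)" using u unfolding t_def R_def by simp
    have nt: "norm (y - u) \<ge> t" unfolding t_def d_def
      using norm_triangle_ineq4[of "u - y" "x0 - y"] by (simp add: norm_minus_commute)
    have "V < - (tau * C * (1 + d) + tau * C * t) + (norm (y - u))\<^sup>2 / 2"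
      using big_real[OF _ _ tgt nt] tau C0 d_def by simp
    also have "- (tau * C * (1 + d) + tau * C * t) = tau * (- (C * (1 + norm (u - x0))))"
      unfolding t_def by (simp add: algebra_simps)
    finally have "ereal V < ereal (tau * (- (C * (1 + norm (u - x0))))) + ereal ((norm (y - u))\<^sup>2 / 2)"
      by simp
    also have "\<dots> \<le> F u" unfolding F_def
      using ereal_mult_left_mono[OF lb[of u], of "ereal tau"] tau by (intro add_right_mono) simp
    finally show ?thesis .
  qed
  have lF: "lscp F" unfolding F_def
    by (rule lscp_F[OF lg _ tau ninf]) (intro continuous_intros, auto)
  have "R \<ge> 0" unfolding R_def d_def using tau C0 by simp
  then obtain p where p: "p \<in> cball x0 R" "\<And>u. u \<in> cball x0 R \<Longrightarrow> F p \<le> F u"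
    using lscp_min[OF lF, of "cball x0 R"] by auto
  have "F p \<le> F u" for u
  proof (cases "u \<in> cball x0 R")
    case True then show ?thesis using p by auto
  next
    case False
    then have "norm (u - x0) > R" by (simp add: dist_norm norm_minus_commute)
    then have "F u > ereal V" by (rule far)
    moreover have "F p \<le> F x0" using p \<open>R \<ge> 0\<close> by simp
    ultimately show ?thesis using FV by simp
  qed
  then show ?thesis unfolding F_def by blast
qed

lemma eps_arg:
  fixes X Y b :: real
  assumes "b \<ge> 0" "\<And>s. 0 < s \<Longrightarrow> s < 1 \<Longrightarrow> X \<le> Y + s * b"
  shows "X \<le> Y"
proof (rule ccontr)
  assume "\<not> X \<le> Y"
  define s where "s = min (1/2) ((X - Y) / (2 * (b + 1)))"
  have s: "0 < s" "s < 1" using \<open>\<not> X \<le> Y\<close> assms(1) by (auto simp: s_def)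
  have "s * b \<le> ((X - Y) / (2 * (b + 1))) * b" using assms(1) by (intro mult_right_mono) (auto simp: s_def)
  also have "\<dots> < X - Y"
  proof -
    have "Y * (b + 2) < X * (b + 2)" using \<open>\<not> X \<le> Y\<close> assms(1) by (intro mult_strict_right_mono) auto
    then show ?thesis using assms(1) by (simp add: field_simps)
  qed
  finally show False using assms(2)[OF s] by linarith
qed

lemma prox_opt:
  fixes g :: "'a::real_inner \<Rightarrow> ereal"
  assumes cv: "ext_convex g" and ninf: "\<And>x. g x \<noteq> -\<infinity>" and tau: "tau > 0"
    and pmin: "\<And>u. ereal tau * g p + ereal ((norm (y - p))\<^sup>2 / 2) \<le> ereal tau * g u + ereal ((norm (y - u))\<^sup>2 / 2)"
    and gp: "g p = ereal gp" and gz: "g z = ereal gz"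
  shows "tau * gp + (y - p) \<bullet> (z - p) \<le> tau * gz"
proof (rule eps_arg[where b = "(norm (z - p))\<^sup>2 / 2"])
  fix s :: real assume s: "0 < s" "s < 1"
  define u where "u = s *\<^sub>R z + (1 - s) *\<^sub>R p"
  have "g u \<le> ereal s * g z + ereal (1 - s) * g p" using cv s unfolding ext_convex_def u_def by blast
  then have gu1: "g u \<le> ereal (s * gz + (1 - s) * gp)" using gp gz by simp
  then obtain gu where gu: "g u = ereal gu" using ninf[of u] by (cases "g u") auto
  have gule: "gu \<le> s * gz + (1 - s) * gp" using gu1 gu by simp
  have "ereal (tau * gp + (norm (y - p))\<^sup>2 / 2) \<le> ereal (tau * gu + (norm (y - u))\<^sup>2 / 2)"
    using pmin[of u] gp gu by simp
  then have m1: "tau * gp + (norm (y - p))\<^sup>2 / 2 \<le> tau * gu + (norm (y - u))\<^sup>2 / 2" by simp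
  have yu: "y - u = (y - p) - s *\<^sub>R (z - p)" by (simp add: u_def algebra_simps)
  have nyu: "(norm (y - u))\<^sup>2 = (norm (y - p))\<^sup>2 - 2 * s * ((y - p) \<bullet> (z - p)) + s\<^sup>2 * (norm (z - p))\<^sup>2"
    unfolding yu power2_norm_eq_inner by (simp add: inner_diff_left inner_diff_right algebra_simps power2_eq_square inner_commute)
  have "tau * gu \<le> tau * (s * gz + (1 - s) * gp)" using gule tau by simp
  then have "s * (tau * gp) \<le> s * (tau * gz - (y - p) \<bullet> (z - p) + s * ((norm (z - p))\<^sup>2 / 2))"
    using m1 nyu by (simp add: algebra_simps power2_eq_square)
  then have "tau * gp \<le> tau * gz - (y - p) \<bullet> (z - p) + s * ((norm (z - p))\<^sup>2 / 2)"
    using s by simp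
  then show "tau * gp + (y - p) \<bullet> (z - p) \<le> tau * gz + s * ((norm (z - p))\<^sup>2 / 2)" by simp
qed simp

lemma convex_grad_ineq:
  fixes f :: "'a::real_inner \<Rightarrow> real"
  assumes cv: "convex_on UNIV f" and d: "(f has_derivative (\<lambda>h. G \<bullet> h)) (at x)"
  shows "f z \<ge> f x + G \<bullet> (z - x)"
proof -
  define h where "h t = f (x + t *\<^sub>R (z - x))" for t :: real
  have hc: "convex_on UNIV h"
  proof (rule convex_onI)
    fix t a b :: real assume t: "0 < t" "t < 1"
    have "x + ((1 - t) *\<^sub>R a + t *\<^sub>R b) *\<^sub>R (z - x) = (1 - t) *\<^sub>R (x + a *\<^sub>R (z - x)) + t *\<^sub>R (x + b *\<^sub>R (z - x))"
      by (simp add: algebra_simps)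
    then show "h ((1 - t) *\<^sub>R a + t *\<^sub>R b) \<le> (1 - t) * h a + t * h b"
      unfolding h_def using convex_onD[OF cv, of t] t by simp
  qed simp
  have lin: "((\<lambda>t. x + t *\<^sub>R (z - x)) has_derivative (\<lambda>t. t *\<^sub>R (z - x))) (at 0)"
    by (auto intro!: derivative_eq_intros)
  have "(h has_derivative (\<lambda>t. G \<bullet> (t *\<^sub>R (z - x)))) (at 0)"
    unfolding h_def using has_derivative_compose[OF lin, of f "\<lambda>h. G \<bullet> h"] d by simp
  moreover have eq: "(\<lambda>t. G \<bullet> (t *\<^sub>R (z - x))) = (*) (G \<bullet> (z - x))" by (auto simp: fun_eq_iff)
  ultimately have "(h has_field_derivative (G \<bullet> (z - x))) (at 0)"
    unfolding has_field_derivative_def by simp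
  then have "h 1 - h 0 \<ge> (G \<bullet> (z - x)) * (1 - 0)"
    using convex_on_imp_above_tangent[OF hc, of 0 1 "G \<bullet> (z - x)"] by simp
  then show ?thesis unfolding h_def by simp
qed

lemma descent:
  fixes f :: "'a::real_inner \<Rightarrow> real"
  assumes d: "\<And>x. (f has_derivative (\<lambda>h. G x \<bullet> h)) (at x)"
    and lip: "\<And>x y. norm (G x - G y) \<le> L * norm (x - y)"
  shows "f p \<le> f x + G x \<bullet> (p - x) + L / 2 * (norm (p - x))\<^sup>2"
proof -
  define e where "e = p - x"
  define \<phi> where "\<phi> t = f (x + t *\<^sub>R e) - t * (G x \<bullet> e) - L / 2 * t\<^sup>2 * (norm e)\<^sup>2" for t :: real
  have "\<phi> 0 \<ge> \<phi> 1"
  proof (rule DERIV_nonpos_imp_nonincreasing[of 0 1])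
    fix t :: real assume t: "0 \<le> t" "t \<le> 1"
    have lin: "((\<lambda>t. x + t *\<^sub>R e) has_derivative (\<lambda>t. t *\<^sub>R e)) (at t)"
      by (auto intro!: derivative_eq_intros)
    have "((\<lambda>t. f (x + t *\<^sub>R e)) has_derivative (\<lambda>s. G (x + t *\<^sub>R e) \<bullet> (s *\<^sub>R e))) (at t)"
      using has_derivative_compose[OF lin d[of "x + t *\<^sub>R e"]] by simp
    moreover have eq: "(\<lambda>s. G (x + t *\<^sub>R e) \<bullet> (s *\<^sub>R e)) = (*) (G (x + t *\<^sub>R e) \<bullet> e)" by (auto simp: fun_eq_iff)
    ultimately have d1: "((\<lambda>t. f (x + t *\<^sub>R e)) has_field_derivative (G (x + t *\<^sub>R e) \<bullet> e)) (at t)"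
      unfolding has_field_derivative_def by simp
    have "(\<phi> has_field_derivative (G (x + t *\<^sub>R e) \<bullet> e - G x \<bullet> e - L / 2 * (2 * t) * (norm e)\<^sup>2)) (at t)"
      unfolding \<phi>_def by (auto intro!: derivative_eq_intros d1)
    moreover have "G (x + t *\<^sub>R e) \<bullet> e - G x \<bullet> e - L / 2 * (2 * t) * (norm e)\<^sup>2 \<le> 0"
    proof -
      have "G (x + t *\<^sub>R e) \<bullet> e - G x \<bullet> e = (G (x + t *\<^sub>R e) - G x) \<bullet> e" by (simp add: inner_diff_left)
      also have "\<dots> \<le> norm (G (x + t *\<^sub>R e) - G x) * norm e" by (rule norm_cauchy_schwarz)
      also have "\<dots> \<le> (L * norm (t *\<^sub>R e)) * norm e" using lip[of "x + t *\<^sub>R e" x] by (simp add: mult_right_mono)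
      also have "\<dots> = L * t * (norm e)\<^sup>2" using t by (simp add: power2_eq_square)
      finally show ?thesis by simp
    qed
    ultimately show "\<exists>y. (\<phi> has_real_derivative y) (at t) \<and> y \<le> 0" by blast
  qed simp
  then show ?thesis unfolding \<phi>_def e_def by simp
qed

lemma gradf_lip:
  fixes D :: "'i pmf" and gradi :: "'i \<Rightarrow> 'a::euclidean_space \<Rightarrow> 'a"
  assumes sm: "\<And>i x y. norm (gradi i x - gradi i y) \<le> L * norm (x - y)"
    and int: "\<And>x. integrable (measure_pmf D) (\<lambda>i. gradi i x)"
    and ex: "\<And>x. measure_pmf.expectation D (\<lambda>i. gradi i x) = gradf x"
  shows "norm (gradf x - gradf y) \<le> L * norm (x - y)"
proof -
  have "gradf x - gradf y = measure_pmf.expectation D (\<lambda>i. gradi i x - gradi i y)"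
    using ex[of x] ex[of y] Bochner_Integration.integral_diff[OF int[of x] int[of y]] by simp
  then have "norm (gradf x - gradf y) \<le> measure_pmf.expectation D (\<lambda>i. norm (gradi i x - gradi i y))"
    using integral_norm_bound by metis
  also have "\<dots> \<le> measure_pmf.expectation D (\<lambda>i. L * norm (x - y))"
    using integrable_norm[OF Bochner_Integration.integrable_diff[OF int[of x] int[of y]]]
    by (intro integral_mono) (auto intro: sm)
  also have "\<dots> = L * norm (x - y)" by simp
  finally show ?thesis .
qed

lemma lin_combo:
  fixes tgp Y tgz P T a b c F1 F2 LN E EN N :: real
  assumes "tgp + Y \<le> tgz" "Y = P - T" "T = a + b + c" "a \<le> F1" "b \<le> F2 + LN / 2" "c \<le> E / 2 + EN / 2"
  shows "2 * P - N \<le> 2 * F1 + (2 * tgz - 2 * tgp) + E + 2 * F2 + (EN + LN - N)"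
  using assms by linarith

theorem lemmaA5:
  fixes D :: "'i pmf"
    and fi :: "'i \<Rightarrow> 'a::euclidean_space \<Rightarrow> real"
    and gradi :: "'i \<Rightarrow> 'a \<Rightarrow> 'a"
    and f :: "'a \<Rightarrow> real"
    and gradf :: "'a \<Rightarrow> 'a"
    and g :: "'a \<Rightarrow> ereal"
    and L \<tau> \<epsilon> :: real
    and xt z :: 'a
    and it :: 'i
  assumes L_pos: "L > 0"
    and fi_convex: "\<And>i. convex_on UNIV (fi i)"
    and fi_grad: "\<And>i x. (fi i has_derivative (\<lambda>h. gradi i x \<bullet> h)) (at x)"
    and fi_smooth: "\<And>i x y. norm (gradi i x - gradi i y) \<le> L * norm (x - y)"
    and fi_integrable: "\<And>x. integrable (measure_pmf D) (\<lambda>i. fi i x)"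
    and f_def: "\<And>x. f x = measure_pmf.expectation D (\<lambda>i. fi i x)"
    and f_grad: "\<And>x. (f has_derivative (\<lambda>h. gradf x \<bullet> h)) (at x)"
    and gradi_integrable: "\<And>x. integrable (measure_pmf D) (\<lambda>i. gradi i x)"
    and grad_expect: "\<And>x. measure_pmf.expectation D (\<lambda>i. gradi i x) = gradf x"
    and g_proper: "proper_fun g"
    and g_convex: "ext_convex g"
    and g_lsc: "lsc g"
    and tau_pos: "\<tau> > 0"
    and eps_pos: "\<epsilon> > 0"
  shows "ereal ((norm (prox \<tau> g (xt - \<tau> *\<^sub>R gradi it xt) - z))\<^sup>2 - (norm (xt - z))\<^sup>2)
    \<le> ereal (2 * \<tau> * (fi it z - fi it xt))
       + ereal (2 * \<tau>) * (g z - g (prox \<tau> g (xt - \<tau> *\<^sub>R gradi it xt)))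
       + ereal (\<tau> / \<epsilon> * (norm (gradi it xt - gradf xt))\<^sup>2)
       + ereal (2 * \<tau> * (f xt - f (prox \<tau> g (xt - \<tau> *\<^sub>R gradi it xt))))
       + ereal ((\<tau> * \<epsilon> + \<tau> * L - 1) * (norm (xt - prox \<tau> g (xt - \<tau> *\<^sub>R gradi it xt)))\<^sup>2)"
proof -
  let ?Gi = "gradi it xt"
  define y where "y = xt - \<tau> *\<^sub>R ?Gi"
  define p where "p = prox \<tau> g y"
  define F where "F u = ereal \<tau> * g u + ereal ((norm (y - u))\<^sup>2 / 2)" for u
  have ninf: "\<And>x. g x \<noteq> -\<infinity>" using g_proper unfolding proper_fun_def by auto
  obtain q where q: "\<forall>u. F q \<le> F u"
    using prox_exists[OF g_proper g_convex g_lsc tau_pos, of y] unfolding F_def by blast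
  have "is_arg_min F (\<lambda>_. True) p"
    unfolding p_def prox_def F_def[symmetric] arg_min_def
    by (rule someI[of _ q]) (use q in \<open>auto simp: is_arg_min_def not_less\<close>)
  then have pmin: "\<And>u. F p \<le> F u" by (auto simp: is_arg_min_def not_less)
  obtain x0 where "g x0 \<noteq> \<infinity>" using g_proper unfolding proper_fun_def by auto
  then have "F x0 \<noteq> \<infinity>" using ninf[of x0] tau_pos by (cases "g x0") (auto simp: F_def)
  then have "F p \<noteq> \<infinity>" using pmin[of x0] by auto
  then have "g p \<noteq> \<infinity>" using tau_pos by (auto simp: F_def)
  then obtain gp where gp: "g p = ereal gp" using ninf[of p] by (cases "g p") auto
  let ?Gf = "gradf xt"
  define e where "e = ?Gi - ?Gf"
  define N where "N = (norm (xt - p))\<^sup>2"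
  show ?thesis
  proof (cases "g z")
    case PInf
    then show ?thesis using gp tau_pos unfolding p_def[symmetric] y_def[symmetric] by simp
  next
    case MInf then show ?thesis using ninf by simp
  next
    case (real gz)
    have A: "\<tau> * gp + (y - p) \<bullet> (z - p) \<le> \<tau> * gz"
      by (rule prox_opt[OF g_convex ninf tau_pos _ gp real]) (use pmin in \<open>simp add: F_def\<close>)
    have B: "fi it z \<ge> fi it xt + ?Gi \<bullet> (z - xt)" by (rule convex_grad_ineq[OF fi_convex fi_grad])
    have lip: "\<And>x y. norm (gradf x - gradf y) \<le> L * norm (x - y)"
      by (rule gradf_lip[OF fi_smooth gradi_integrable grad_expect])
    have C: "f p \<le> f xt + ?Gf \<bullet> (p - xt) + L / 2 * (norm (p - xt))\<^sup>2"
      by (rule descent[OF f_grad lip])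
    have D: "e \<bullet> (xt - p) \<le> (norm e)\<^sup>2 / (2 * \<epsilon>) + \<epsilon> * N / 2"
    proof -
      have "0 \<le> (norm (e - \<epsilon> *\<^sub>R (xt - p)))\<^sup>2" by simp
      also have "\<dots> = (norm e)\<^sup>2 - 2 * \<epsilon> * (e \<bullet> (xt - p)) + \<epsilon>\<^sup>2 * N"
        unfolding N_def power2_norm_eq_inner
        by (simp add: inner_diff_left inner_diff_right algebra_simps power2_eq_square inner_commute)
      finally have "2 * \<epsilon> * (e \<bullet> (xt - p)) \<le> (norm e)\<^sup>2 + \<epsilon>\<^sup>2 * N" by simp
      then show ?thesis using eps_pos by (simp add: field_simps power2_eq_square)
    qed
    define P where "P = (xt - p) \<bullet> (z - p)"
    have I1: "(norm (p - z))\<^sup>2 - (norm (xt - z))\<^sup>2 = 2 * P - N"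
      unfolding P_def N_def power2_norm_eq_inner
      by (simp add: inner_diff_left inner_diff_right algebra_simps inner_commute)
    have I2: "(y - p) \<bullet> (z - p) = P - \<tau> * (?Gi \<bullet> (z - p))"
      unfolding P_def y_def by (simp add: inner_diff_left inner_diff_right algebra_simps)
    have I3: "\<tau> * (?Gi \<bullet> (z - p)) = \<tau> * (?Gi \<bullet> (z - xt)) + \<tau> * (?Gf \<bullet> (xt - p)) + \<tau> * (e \<bullet> (xt - p))"
      unfolding e_def by (simp add: inner_diff_left inner_diff_right algebra_simps)
    have C': "\<tau> * (?Gf \<bullet> (xt - p)) \<le> \<tau> * (f xt - f p) + \<tau> * (L * N) / 2"
    proof -
      have "?Gf \<bullet> (xt - p) \<le> f xt - f p + L * N / 2"
        using C unfolding N_def by (simp add: norm_minus_commute inner_diff_right)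
      from mult_left_mono[OF this, of \<tau>] tau_pos show ?thesis by (simp add: algebra_simps)
    qed
    have B': "\<tau> * (?Gi \<bullet> (z - xt)) \<le> \<tau> * (fi it z - fi it xt)"
      using mult_left_mono[of "?Gi \<bullet> (z - xt)" "fi it z - fi it xt" \<tau>] B tau_pos by simp
    have D': "\<tau> * (e \<bullet> (xt - p)) \<le> \<tau> * ((norm e)\<^sup>2 / \<epsilon>) / 2 + \<tau> * (\<epsilon> * N) / 2"
      using mult_left_mono[OF D, of \<tau>] tau_pos by (simp add: algebra_simps)
    have main: "(norm (p - z))\<^sup>2 - (norm (xt - z))\<^sup>2 \<le> 2 * \<tau> * (fi it z - fi it xt) + 2 * \<tau> * (gz - gp)
        + \<tau> / \<epsilon> * (norm e)\<^sup>2 + 2 * \<tau> * (f xt - f p) + (\<tau> * \<epsilon> + \<tau> * L - 1) * N"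
    proof -
      have e1: "\<tau> / \<epsilon> * (norm e)\<^sup>2 = \<tau> * ((norm e)\<^sup>2 / \<epsilon>)" by simp
      have e2: "(\<tau> * \<epsilon> + \<tau> * L - 1) * N = \<tau> * (\<epsilon> * N) + \<tau> * (L * N) - N" by (simp add: algebra_simps)
      have e3: "2 * \<tau> * (gz - gp) = 2 * (\<tau> * gz) - 2 * (\<tau> * gp)" by (simp add: algebra_simps)
      have e4: "2 * \<tau> * (fi it z - fi it xt) = 2 * (\<tau> * (fi it z - fi it xt))" by simp
      have e5: "2 * \<tau> * (f xt - f p) = 2 * (\<tau> * (f xt - f p))" by simp
      show ?thesis unfolding e1 e2 e3 e4 e5 I1
        by (rule lin_combo[OF A I2 I3 B' C' D'])
    qed
    show ?thesis
      unfolding p_def[symmetric] y_def[symmetric] using main real gp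
      by (simp add: e_def N_def)
  qed
qed

end
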